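(* If $G$ is an infinite graph of minimum degree $\delta(G)\ge 4$, then $G$ admits a majority $3$-edge-coloring.
   Context: Degrees may be infinite cardinals. A majority $3$-edge-coloring is a map $c:E(G)\to\{1,2,3\}$ such that for every vertex $v$ and every color $\alpha$, the cardinality of the set of edges incident to $v$ colored $\alpha$ is at most the cardinality of the set of edges incident to $v$ not colored $\alpha$. *)

theory Defs
  imports Main "HOL-Library.Equipollence"
begin

definition graph :: "'a set \<Rightarrow> 'a set set \<Rightarrow> bool" where
  "graph V E \<longleftrightarrow> (\<forall>e\<in>E. e \<subseteq> V \<and> card e = 2)"

definition incident :: "'a set set \<Rightarrow> 'a \<Rightarrow> 'a set set" where
  "incident E v = {e \<in> E. v \<in> e}"

definition min_degree_ge :: "'a set \<Rightarrow> 'a set set \<Rightarrow> nat \<Rightarrow> bool" where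
  "min_degree_ge V E k \<longleftrightarrow> (\<forall>v\<in>V. {..<k} \<lesssim> incident E v)"

definition majority_3_edge_coloring :: "'a set \<Rightarrow> 'a set set \<Rightarrow> ('a set \<Rightarrow> nat) \<Rightarrow> bool" where
  "majority_3_edge_coloring V E c \<longleftrightarrow>
     (\<forall>e\<in>E. c e \<in> {1,2,3}) \<and>
     (\<forall>v\<in>V. \<forall>\<alpha>\<in>{1,2,3::nat}.
        {e \<in> incident E v. c e = \<alpha>} \<lesssim> {e \<in> incident E v. c e \<noteq> \<alpha>})"

end

theory Submission
  imports Defs "HOL-Library.Equipollence"
begin

lemma compactness:
  fixes Cs :: "'c set" and dom :: "'i \<Rightarrow> 'd set" and vars :: "'c \<Rightarrow> 'i set"
    and sat :: "'c \<Rightarrow> ('i \<Rightarrow> 'd) \<Rightarrow> bool"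
  assumes fin_dom: "\<And>i. finite (dom i)"
    and fin_vars: "\<And>\<gamma>. \<gamma> \<in> Cs \<Longrightarrow> finite (vars \<gamma>)"
    and local: "\<And>\<gamma> f g. \<gamma> \<in> Cs \<Longrightarrow> (\<And>i. i \<in> vars \<gamma> \<Longrightarrow> f i = g i) \<Longrightarrow> sat \<gamma> f \<Longrightarrow> sat \<gamma> g"
    and finsat: "\<And>C. C \<subseteq> Cs \<Longrightarrow> finite C \<Longrightarrow> \<exists>f. (\<forall>i. f i \<in> dom i) \<and> (\<forall>\<gamma>\<in>C. sat \<gamma> f)"
  shows "\<exists>f. (\<forall>i. f i \<in> dom i) \<and> (\<forall>\<gamma>\<in>Cs. sat \<gamma> f)"
proof -
  define ok where "ok P \<longleftrightarrow> (\<forall>C Q. C \<subseteq> Cs \<longrightarrow> finite C \<longrightarrow> Q \<subseteq> P \<longrightarrow> finite Q \<longrightarrow>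
      (\<exists>f. (\<forall>i. f i \<in> dom i) \<and> (\<forall>\<gamma>\<in>C. sat \<gamma> f) \<and> (\<forall>p\<in>Q. f (fst p) = snd p)))" for P :: "('i \<times> 'd) set"
  define A where "A = {P. ok P}"
  have "{} \<in> A" using finsat by (auto simp: A_def ok_def)
  have "\<exists>M\<in>A. \<forall>X\<in>A. M \<subseteq> X \<longrightarrow> X = M"
  proof (rule subset_Zorn_nonempty)
    show "A \<noteq> {}" using \<open>{} \<in> A\<close> by blast
  next
    fix \<C> assume ne: "\<C> \<noteq> {}" and ch: "subset.chain A \<C>"
    show "\<Union>\<C> \<in> A" unfolding A_def mem_Collect_eq ok_def
    proof (intro allI impI)
      fix C Q assume C: "C \<subseteq> Cs" "finite C" and Q: "Q \<subseteq> \<Union>\<C>" "finite Q"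
      obtain B where "B \<in> \<C>" "Q \<subseteq> B" using finite_subset_Union_chain[OF Q(2) Q(1) ne ch] by blast
      then have "ok B" using ch by (auto simp: A_def subset.chain_def)
      then show "\<exists>f. (\<forall>i. f i \<in> dom i) \<and> (\<forall>\<gamma>\<in>C. sat \<gamma> f) \<and> (\<forall>p\<in>Q. f (fst p) = snd p)"
        using C \<open>Q \<subseteq> B\<close> Q(2) unfolding ok_def by blast
    qed
  qed
  then obtain M where MA: "M \<in> A" and Mmax: "\<And>X. X \<in> A \<Longrightarrow> M \<subseteq> X \<Longrightarrow> X = M" by blast
  have okM: "ok M" using MA by (simp add: A_def)
  have okD: "\<exists>f. (\<forall>i. f i \<in> dom i) \<and> (\<forall>\<gamma>\<in>C. sat \<gamma> f) \<and> (\<forall>p\<in>Q. f (fst p) = snd p)"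
    if "C \<subseteq> Cs" "finite C" "Q \<subseteq> M" "finite Q" for C Q
    using okM that unfolding ok_def by simp
  have total: "\<exists>d. (i, d) \<in> M" for i
  proof (rule ccontr)
    assume nd: "\<not> (\<exists>d. (i, d) \<in> M)"
    have "\<not> ok (insert (i, d) M)" if "d \<in> dom i" for d
    proof
      assume "ok (insert (i, d) M)"
      then have "insert (i, d) M \<in> A" by (simp add: A_def)
      from Mmax[OF this] nd show False by blast
    qed
    define P where "P d p \<longleftrightarrow> fst p \<subseteq> Cs \<and> finite (fst p) \<and> snd p \<subseteq> insert (i, d) M \<and> finite (snd p) \<and>
      \<not> (\<exists>f. (\<forall>i. f i \<in> dom i) \<and> (\<forall>\<gamma>\<in>fst p. sat \<gamma> f) \<and> (\<forall>q\<in>snd p. f (fst q) = snd q))" for d p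
    have "\<exists>p. P d p" if "d \<in> dom i" for d
    proof -
      have "\<not> ok (insert (i, d) M)" using \<open>d \<in> dom i\<close> \<open>\<And>d. d \<in> dom i \<Longrightarrow> \<not> ok (insert (i, d) M)\<close> by blast
      then obtain C Q where "C \<subseteq> Cs" "finite C" "Q \<subseteq> insert (i, d) M" "finite Q"
        "\<not> (\<exists>f. (\<forall>i. f i \<in> dom i) \<and> (\<forall>\<gamma>\<in>C. sat \<gamma> f) \<and> (\<forall>q\<in>Q. f (fst q) = snd q))"
        unfolding ok_def by blast
      then have "P d (C, Q)" by (simp add: P_def)
      then show ?thesis by blast
    qed
    then obtain pp where pp: "\<And>d. d \<in> dom i \<Longrightarrow> P d (pp d)" by metis
    define CC where "CC d = fst (pp d)" for d
    define QQ where "QQ d = snd (pp d)" for d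
    have CQ: "CC d \<subseteq> Cs \<and> finite (CC d) \<and> QQ d \<subseteq> insert (i, d) M \<and> finite (QQ d) \<and>
      \<not> (\<exists>f. (\<forall>i. f i \<in> dom i) \<and> (\<forall>\<gamma>\<in>CC d. sat \<gamma> f) \<and> (\<forall>p\<in>QQ d. f (fst p) = snd p))"
      if "d \<in> dom i" for d
      using pp[OF that] unfolding P_def CC_def QQ_def by simp
    define C where "C = (\<Union>d\<in>dom i. CC d)"
    define Q where "Q = (\<Union>d\<in>dom i. QQ d - {(i, d)})"
    have CQ1: "CC d \<subseteq> Cs" "finite (CC d)" "QQ d \<subseteq> insert (i, d) M" "finite (QQ d)" if "d \<in> dom i" for d
      using CQ[OF that] by simp_all
    have "C \<subseteq> Cs" "finite C" using CQ1(1,2) fin_dom by (auto simp: C_def)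
    moreover have "Q \<subseteq> M" using CQ1(3) by (force simp: Q_def)
    moreover have "finite Q" using CQ1(4) fin_dom by (auto simp: Q_def)
    ultimately have "\<exists>f. (\<forall>i. f i \<in> dom i) \<and> (\<forall>\<gamma>\<in>C. sat \<gamma> f) \<and> (\<forall>p\<in>Q. f (fst p) = snd p)"
      by (rule okD)
    then obtain f where f: "\<forall>i. f i \<in> dom i" "\<forall>\<gamma>\<in>C. sat \<gamma> f" "\<forall>p\<in>Q. f (fst p) = snd p"
      by (elim exE conjE)
    define d where "d = f i"
    have d: "d \<in> dom i" using f(1) by (simp add: d_def)
    have "\<forall>\<gamma>\<in>CC d. sat \<gamma> f" using f(2) d by (auto simp: C_def)
    moreover have "\<forall>p\<in>QQ d. f (fst p) = snd p"
    proof
      fix p assume p: "p \<in> QQ d"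
      show "f (fst p) = snd p"
      proof (cases "p = (i, d)")
        case True then show ?thesis by (simp add: d_def)
      next
        case False then have "p \<in> Q" using p d by (auto simp: Q_def)
        then show ?thesis using f(3) by blast
      qed
    qed
    ultimately show False using CQ[OF d] f(1) by auto
  qed
  define F where "F i = (SOME d. (i, d) \<in> M)" for i
  have FM: "(i, F i) \<in> M" for i using total[of i] unfolding F_def by (rule someI_ex)
  have "F i \<in> dom i" for i
  proof -
    obtain f where f1: "\<forall>j. f j \<in> dom j" and f2: "\<forall>p\<in>{(i, F i)}. f (fst p) = snd p"
      using okD[of "{}" "{(i, F i)}"] FM by auto
    have "f i = F i" using f2 by simp
    moreover have "f i \<in> dom i" using f1 by simp
    ultimately show ?thesis by simp
  qed
  moreover have "sat \<gamma> F" if g: "\<gamma> \<in> Cs" for \<gamma>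
  proof -
    let ?Q = "(\<lambda>i. (i, F i)) ` vars \<gamma>"
    have "?Q \<subseteq> M" "finite ?Q" using FM fin_vars[OF g] by auto
    then obtain f where f: "\<forall>\<gamma>'\<in>{\<gamma>}. sat \<gamma>' f" "\<forall>p\<in>?Q. f (fst p) = snd p"
      using okD[of "{\<gamma>}" ?Q] g by auto
    show ?thesis by (rule local[OF g _ ]) (use f in auto)
  qed
  ultimately show ?thesis by blast
qed

definition tm :: "('a \<times> 'a) \<Rightarrow> 'a \<Rightarrow> int" where
  "tm e x = (if fst e = x then 1 else 0) - (if snd e = x then 1 else 0)"

lemma tm_abs: "\<bar>tm e x\<bar> \<le> 1"
  by (auto simp: tm_def)

lemma balanced_orientation:
  fixes I :: "'i set" and p :: "'i \<Rightarrow> 'a \<times> 'a"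
  assumes "finite I" and infU: "infinite (UNIV :: 'i set)"
  shows "\<exists>q. (\<forall>i\<in>I. q i = p i \<or> q i = prod.swap (p i)) \<and> (\<forall>x. \<bar>\<Sum>i\<in>I. tm (q i) x\<bar> \<le> 1)"
  using assms(1)
proof (induction "card I" arbitrary: I p rule: less_induct)
  case less
  show ?case
  proof (cases "\<exists>i\<in>I. \<exists>j\<in>I. \<exists>v. i \<noteq> j \<and> (fst (p i) = v \<or> snd (p i) = v) \<and> (fst (p j) = v \<or> snd (p j) = v)")
    case True
    then obtain i j v where ij: "i \<in> I" "j \<in> I" "i \<noteq> j" and vi: "fst (p i) = v \<or> snd (p i) = v"
      and vj: "fst (p j) = v \<or> snd (p j) = v" by blast
    define u where "u = (if fst (p i) = v then snd (p i) else fst (p i))"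
    define w where "w = (if fst (p j) = v then snd (p j) else fst (p j))"
    have pi: "p i = (v, u) \<or> p i = (u, v)" using vi by (cases "p i") (auto simp: u_def)
    have pj: "p j = (v, w) \<or> p j = (w, v)" using vj by (cases "p j") (auto simp: w_def)
    obtain k :: 'i where k: "k \<notin> I" using less.prems infU
      by (metis ex_new_if_finite)
    define I' where "I' = insert k (I - {i, j})"
    define p' where "p' = p(k := (u, w))"
    have fI': "finite I'" using less.prems by (simp add: I'_def)
    have cI: "card I' < card I"
    proof -
      have "card (I - {i, j}) = card I - 2" using ij less.prems by (simp add: card_Diff_subset)
      moreover have "card I \<ge> 2"
      proof -
        have "{i, j} \<subseteq> I" using ij by auto
        then have "card {i, j} \<le> card I" using less.prems by (simp add: card_mono)
        then show ?thesis using ij by simp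
      qed
      ultimately show ?thesis using k less.prems by (simp add: I'_def)
    qed
    obtain q' where q'1: "\<forall>l\<in>I'. q' l = p' l \<or> q' l = prod.swap (p' l)"
      and q'2: "\<forall>x. \<bar>\<Sum>l\<in>I'. tm (q' l) x\<bar> \<le> 1"
      using less.hyps[OF cI fI'] by blast
    have qk: "q' k = (u, w) \<or> q' k = (w, u)" using q'1 by (auto simp: I'_def p'_def)
    define q where "q l = (if l = i then (if fst (q' k) = u then (u, v) else (v, u))
      else if l = j then (if fst (q' k) = u then (v, w) else (w, v)) else q' l)" for l
    have A: "\<forall>l\<in>I. q l = p l \<or> q l = prod.swap (p l)"
    proof
      fix l assume l: "l \<in> I"
      show "q l = p l \<or> q l = prod.swap (p l)"
      proof (cases "l = i \<or> l = j")
        case True then show ?thesis using pi pj ij by (auto simp: q_def)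
      next
        case False
        then have "l \<in> I'" using l by (simp add: I'_def)
        moreover have "l \<noteq> k" using k l by auto
        ultimately show ?thesis using q'1 False by (auto simp: q_def p'_def)
      qed
    qed
    have B: "(\<Sum>l\<in>I. tm (q l) x) = (\<Sum>l\<in>I'. tm (q' l) x)" for x
    proof -
      have "(\<Sum>l\<in>I. tm (q l) x) = tm (q i) x + tm (q j) x + (\<Sum>l\<in>I - {i, j}. tm (q l) x)"
      proof -
        have "I = insert i (insert j (I - {i, j}))" using ij by auto
        then have "(\<Sum>l\<in>I. tm (q l) x) = (\<Sum>l\<in>insert i (insert j (I - {i, j})). tm (q l) x)" by simp
        also have "\<dots> = tm (q i) x + tm (q j) x + (\<Sum>l\<in>I - {i, j}. tm (q l) x)"
          using ij less.prems by simp
        finally show ?thesis .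
      qed
      also have "tm (q i) x + tm (q j) x = tm (q' k) x"
        using qk ij(3) by (elim disjE) (auto simp: q_def tm_def)
      also have "(\<Sum>l\<in>I - {i, j}. tm (q l) x) = (\<Sum>l\<in>I - {i, j}. tm (q' l) x)"
        by (rule sum.cong) (auto simp: q_def)
      also have "tm (q' k) x + (\<Sum>l\<in>I - {i, j}. tm (q' l) x) = (\<Sum>l\<in>I'. tm (q' l) x)"
        using k less.prems by (simp add: I'_def)
      finally show ?thesis .
    qed
    show ?thesis using A B q'2 by (intro exI[of _ q]) simp
  next
    case False
    have "\<bar>\<Sum>i\<in>I. tm (p i) x\<bar> \<le> 1" for x
    proof (cases "\<exists>i\<in>I. fst (p i) = x \<or> snd (p i) = x")
      case True
      then obtain i where i: "i \<in> I" "fst (p i) = x \<or> snd (p i) = x" by blast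
      have "(\<Sum>l\<in>I. tm (p l) x) = (\<Sum>l\<in>{i}. tm (p l) x)"
      proof (rule sum.mono_neutral_right)
        show "\<forall>l\<in>I - {i}. tm (p l) x = 0"
          using False i by (auto simp: tm_def)
      qed (use less.prems i in auto)
      then show ?thesis by (simp add: tm_abs)
    next
      case False
      then have "(\<Sum>l\<in>I. tm (p l) x) = 0" by (intro sum.neutral) (auto simp: tm_def)
      then show ?thesis by simp
    qed
    then show ?thesis by (intro exI[of _ p]) auto
  qed
qed

definition proper_on :: "'e set \<Rightarrow> ('e \<Rightarrow> 'l) \<Rightarrow> ('e \<Rightarrow> 'r) \<Rightarrow> ('e \<Rightarrow> nat) \<Rightarrow> bool" where
  "proper_on F l r c \<longleftrightarrow> (\<forall>f\<in>F. \<forall>g\<in>F. f \<noteq> g \<and> (l f = l g \<or> r f = r g) \<longrightarrow> c f \<noteq> c g)"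

lemma kempe_step:
  assumes proper: "proper_on F l r c"
    and col: "\<forall>f\<in>F. c f < 3"
    and ab: "a < 3" "b < 3" "a \<noteq> b"
    and ax: "\<forall>f\<in>F. l f = x \<longrightarrow> c f \<noteq> a"
    and yb: "\<forall>f\<in>F. r f = y \<longrightarrow> c f \<noteq> b"
  shows "\<exists>c'. (\<forall>f\<in>F. c' f < 3) \<and> proper_on F l r c' \<and> (\<forall>f\<in>F. l f = x \<longrightarrow> c' f \<noteq> a)
     \<and> (\<forall>f\<in>F. r f = y \<longrightarrow> c' f \<noteq> a)"
proof (cases "\<exists>f1\<in>F. r f1 = y \<and> c f1 = a")
  case False
  then show ?thesis using col proper ax by blast
next
  case True
  then obtain f1 where f1: "f1 \<in> F" "r f1 = y" "c f1 = a" by blast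
  have pr: "c f \<noteq> c g" if "f \<in> F" "g \<in> F" "f \<noteq> g" "l f = l g \<or> r f = r g" for f g
    using proper that unfolding proper_on_def by blast
  have uniq_l: "f = g" if "f \<in> F" "g \<in> F" "l f = l g" "c f = c g" for f g
    using pr that by blast
  have uniq_r: "f = g" if "f \<in> F" "g \<in> F" "r f = r g" "c f = c g" for f g
    using pr that by blast
  define nxt where "nxt f = (if c f = a then
      (if \<exists>g\<in>F. l g = l f \<and> c g = b then Some (THE g. g \<in> F \<and> l g = l f \<and> c g = b) else None)
    else if c f = b then
      (if \<exists>g\<in>F. r g = r f \<and> c g = a then Some (THE g. g \<in> F \<and> r g = r f \<and> c g = a) else None)
    else None)" for f
  have nxtD: "g \<in> F \<and> ((c f = a \<and> l g = l f \<and> c g = b) \<or> (c f = b \<and> r g = r f \<and> c g = a))"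
    if "nxt f = Some g" for f g
  proof (cases "c f = a")
    case True
    then have ex: "\<exists>g\<in>F. l g = l f \<and> c g = b" and gd: "g = (THE g. g \<in> F \<and> l g = l f \<and> c g = b)"
      using that by (auto simp: nxt_def split: if_splits)
    from ex obtain g0 where g0: "g0 \<in> F" "l g0 = l f" "c g0 = b" by blast
    have "(THE g. g \<in> F \<and> l g = l f \<and> c g = b) = g0"
      by (rule the_equality) (use g0 uniq_l in auto)
    then show ?thesis using g0 gd True by simp
  next
    case False
    then have cb: "c f = b" using that by (auto simp: nxt_def split: if_splits)
    then have ex: "\<exists>g\<in>F. r g = r f \<and> c g = a" and gd: "g = (THE g. g \<in> F \<and> r g = r f \<and> c g = a)"
      using that ab by (auto simp: nxt_def split: if_splits)
    from ex obtain g0 where g0: "g0 \<in> F" "r g0 = r f" "c g0 = a" by blast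
    have "(THE g. g \<in> F \<and> r g = r f \<and> c g = a) = g0"
      by (rule the_equality) (use g0 uniq_r in auto)
    then show ?thesis using g0 gd cb by simp
  qed
  have nxtI1: "nxt f = Some g" if "c f = a" "g \<in> F" "l g = l f" "c g = b" for f g
  proof -
    have "(THE g. g \<in> F \<and> l g = l f \<and> c g = b) = g"
      by (rule the_equality) (use that uniq_l in auto)
    then show ?thesis using that by (auto simp: nxt_def)
  qed
  have nxtI2: "nxt f = Some g" if "c f = b" "g \<in> F" "r g = r f" "c g = a" for f g
  proof -
    have "(THE g. g \<in> F \<and> r g = r f \<and> c g = a) = g"
      by (rule the_equality) (use that uniq_r in auto)
    then show ?thesis using that ab by (auto simp: nxt_def)
  qed
  define w where "w n = ((\<lambda>z. Option.bind z nxt) ^^ n) (Some f1)" for n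
  have w0: "w 0 = Some f1" by (simp add: w_def)
  have wS: "w (Suc n) = Option.bind (w n) nxt" for n by (simp add: w_def)
  define K where "K = {f. \<exists>n. w n = Some f}"
  have wF: "f \<in> F \<and> (c f = a \<or> c f = b)" if "w n = Some f" for n f
    using that
  proof (induction n arbitrary: f)
    case 0 then show ?case using f1 w0 by simp
  next
    case (Suc n)
    then obtain g where "w n = Some g" "nxt g = Some f" by (cases "w n") (auto simp: wS)
    then show ?case using nxtD by blast
  qed
  have KF: "f \<in> F" "c f = a \<or> c f = b" if "f \<in> K" for f using wF that by (auto simp: K_def)
  have f1K: "f1 \<in> K" using w0 by (auto simp: K_def)
  have nopred: "nxt f \<noteq> Some f1" if fF: "f \<in> F" for f
  proof
    assume "nxt f = Some f1"
    from nxtD[OF this] f1 ab show False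
    proof (elim conjE disjE)
      assume "c f = b" "r f1 = r f" "f1 \<in> F"
      then show False using yb f1 fF by metis
    qed auto
  qed
  have Knext: "g \<in> K" if "f \<in> K" "nxt f = Some g" for f g
  proof -
    from that obtain n where "w n = Some f" by (auto simp: K_def)
    then have "w (Suc n) = Some g" using that by (simp add: wS)
    then show ?thesis by (auto simp: K_def)
  qed
  have nxt_inj: "f = f'" if "nxt f = Some g" "nxt f' = Some g" "f \<in> F" "f' \<in> F" for f f' g
    using nxtD[OF that(1)] nxtD[OF that(2)] that(3,4) ab uniq_l uniq_r by metis
  have Kpred: "f \<in> K" if "g \<in> K" "nxt f = Some g" "f \<in> F" for f g
  proof -
    from that obtain n where n: "w n = Some g" by (auto simp: K_def)
    show ?thesis
    proof (cases n)
      case 0 then show ?thesis using n w0 that nopred by auto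
    next
      case (Suc m)
      then obtain f' where f': "w m = Some f'" "nxt f' = Some g" using n by (cases "w m") (auto simp: wS)
      then have "f' \<in> F" using wF by blast
      then have "f' = f" using nxt_inj f'(2) that(2,3) by blast
      then show ?thesis using f' by (auto simp: K_def)
    qed
  qed
  have closure: "g \<in> K" if "f \<in> K" "g \<in> F" "f \<noteq> g" "l f = l g \<or> r f = r g" "c g = a \<or> c g = b" for f g
  proof -
    have fF: "f \<in> F" and cf: "c f = a \<or> c f = b" using KF that(1) by auto
    have neq: "c f \<noteq> c g" using pr fF that by blast
    from cf show ?thesis
    proof
      assume fa: "c f = a"
      then have gb: "c g = b" using neq that(5) by auto
      from that(4) show ?thesis
      proof
        assume "l f = l g"
        then have "nxt f = Some g" using nxtI1 fa gb that(2) by simp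
        then show ?thesis using Knext that(1) by blast
      next
        assume "r f = r g"
        then have "nxt g = Some f" using nxtI2 fa gb fF by simp
        then show ?thesis using Kpred that(1,2) by blast
      qed
    next
      assume fb: "c f = b"
      then have ga: "c g = a" using neq that(5) by auto
      from that(4) show ?thesis
      proof
        assume "r f = r g"
        then have "nxt f = Some g" using nxtI2 fb ga that(2) by simp
        then show ?thesis using Knext that(1) by blast
      next
        assume "l f = l g"
        then have "nxt g = Some f" using nxtI1 fb ga fF by simp
        then show ?thesis using Kpred that(1,2) by blast
      qed
    qed
  qed
  define sw where "sw z = (if z = a then b else a)" for z
  define c' where "c' f = (if f \<in> K then sw (c f) else c f)" for f
  have C1: "\<forall>f\<in>F. c' f < 3" using col ab by (auto simp: c'_def sw_def)
  have C2: "proper_on F l r c'"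
    unfolding proper_on_def
  proof (intro ballI impI)
    fix f g assume fg: "f \<in> F" "g \<in> F" "f \<noteq> g \<and> (l f = l g \<or> r f = r g)"
    have neq: "c f \<noteq> c g" using pr fg by blast
    show "c' f \<noteq> c' g"
    proof (cases "f \<in> K"; cases "g \<in> K")
      assume "f \<in> K" "g \<in> K"
      then show ?thesis using KF neq ab by (auto simp: c'_def sw_def)
    next
      assume fK: "f \<in> K" and gK: "g \<notin> K"
      have "\<not> (c g = a \<or> c g = b)" using closure[OF fK fg(2)] fg(3) gK by blast
      then show ?thesis using fK gK by (auto simp: c'_def sw_def)
    next
      assume fK: "f \<notin> K" and gK: "g \<in> K"
      have "\<not> (c f = a \<or> c f = b)" using closure[OF gK fg(1)] fg(3) fK by metis
      then show ?thesis using fK gK by (auto simp: c'_def sw_def)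
    next
      assume "f \<notin> K" "g \<notin> K"
      then show ?thesis using neq by (simp add: c'_def)
    qed
  qed
  have C3: "\<forall>f\<in>F. l f = x \<longrightarrow> c' f \<noteq> a"
  proof (intro ballI impI)
    fix f assume f: "f \<in> F" "l f = x"
    show "c' f \<noteq> a"
    proof (cases "f \<in> K")
      case False then show ?thesis using ax f by (simp add: c'_def)
    next
      case True
      then have cfb: "c f = b" using KF ax f by blast
      then have "f \<noteq> f1" using f1 ab by auto
      from True obtain n where n: "w n = Some f" by (auto simp: K_def)
      then obtain m where m: "n = Suc m" using w0 \<open>f \<noteq> f1\<close> by (cases n) auto
      then obtain p where p: "w m = Some p" "nxt p = Some f" using n by (cases "w m") (auto simp: wS)
      have "p \<in> F" using wF p(1) by blast
      from nxtD[OF p(2)] cfb ab have "c p = a" "l f = l p" by auto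
      then show ?thesis using ax \<open>p \<in> F\<close> f by auto
    qed
  qed
  have C4: "\<forall>f\<in>F. r f = y \<longrightarrow> c' f \<noteq> a"
  proof (intro ballI impI)
    fix f assume f: "f \<in> F" "r f = y"
    show "c' f \<noteq> a"
    proof (cases "f \<in> K")
      case False
      have "c f \<noteq> a"
      proof
        assume "c f = a"
        then have "f = f1" using uniq_r f f1 by auto
        then show False using False f1K by simp
      qed
      then show ?thesis using False by (simp add: c'_def)
    next
      case True
      then have "c f = a" using KF yb f by blast
      then show ?thesis using True ab by (simp add: c'_def sw_def)
    qed
  qed
  show ?thesis using C1 C2 C3 C4 by blast
qed

lemma missing_color:
  fixes S :: "'e set" and c :: "'e \<Rightarrow> nat"
  assumes "finite S" "card S \<le> 2"
  shows "\<exists>a<3. \<forall>f\<in>S. c f \<noteq> a"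
proof (rule ccontr)
  assume "\<not> ?thesis"
  then have "\<forall>a<3. a \<in> c ` S" by (metis image_eqI)
  then have "{0, 1, 2} \<subseteq> c ` S" by auto
  then have "card {0::nat, 1, 2} \<le> card (c ` S)" using assms by (intro card_mono) auto
  also have "\<dots> \<le> card S" using assms by (simp add: card_image_le)
  finally show False using assms by simp
qed

lemma bip_color:
  fixes F :: "'e set" and l :: "'e \<Rightarrow> 'l" and r :: "'e \<Rightarrow> 'r"
  assumes "finite F"
  shows "(\<forall>x. card {e\<in>F. l e = x} \<le> 3) \<longrightarrow> (\<forall>y. card {e\<in>F. r e = y} \<le> 3) \<longrightarrow>
    (\<exists>c. (\<forall>e\<in>F. c e < (3::nat)) \<and> proper_on F l r c)"
  using assms
proof (induction F rule: finite_induct)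
  case empty
  then show ?case by (auto simp: proper_on_def)
next
  case (insert e F)
  show ?case
  proof (intro impI)
    assume dl: "\<forall>x. card {f\<in>insert e F. l f = x} \<le> 3" and dr: "\<forall>y. card {f\<in>insert e F. r f = y} \<le> 3"
    have dlF: "card {f\<in>F. l f = x} \<le> 3" for x
    proof -
      have "card {f\<in>F. l f = x} \<le> card {f\<in>insert e F. l f = x}"
        by (rule card_mono) (use insert in auto)
      then show ?thesis using dl by (meson order_trans)
    qed
    have drF: "card {f\<in>F. r f = y} \<le> 3" for y
    proof -
      have "card {f\<in>F. r f = y} \<le> card {f\<in>insert e F. r f = y}"
        by (rule card_mono) (use insert in auto)
      then show ?thesis using dr by (meson order_trans)
    qed
    obtain c where c: "\<forall>f\<in>F. c f < 3" "proper_on F l r c" using insert.IH dlF drF by blast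
    let ?Lx = "{f\<in>F. l f = l e}" and ?Ry = "{f\<in>F. r f = r e}"
    have "insert e ?Lx = {f\<in>insert e F. l f = l e}" by auto
    then have "card (insert e ?Lx) \<le> 3" using dl by metis
    then have cL: "card ?Lx \<le> 2" using insert by simp
    have "insert e ?Ry = {f\<in>insert e F. r f = r e}" by auto
    then have "card (insert e ?Ry) \<le> 3" using dr by metis
    then have cR: "card ?Ry \<le> 2" using insert by simp
    obtain a where a: "a < 3" "\<forall>f\<in>?Lx. c f \<noteq> a" using missing_color[of ?Lx c] cL insert by auto
    obtain b where b: "b < 3" "\<forall>f\<in>?Ry. c f \<noteq> b" using missing_color[of ?Ry c] cR insert by auto
    obtain c' where c': "\<forall>f\<in>F. c' f < 3" "proper_on F l r c'" "\<forall>f\<in>F. l f = l e \<longrightarrow> c' f \<noteq> a"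
      "\<forall>f\<in>F. r f = r e \<longrightarrow> c' f \<noteq> a"
    proof (cases "a = b")
      case True
      then show ?thesis using that c a b by auto
    next
      case False
      show ?thesis using kempe_step[OF c(2) c(1) a(1) b(1) False, of "l e" "r e"] a b that by auto
    qed
    define c'' where "c'' = c'(e := a)"
    have "\<forall>f\<in>insert e F. c'' f < 3" using c' a by (auto simp: c''_def)
    moreover have "proper_on (insert e F) l r c''"
      using c'(2-4) insert.hyps unfolding proper_on_def c''_def by auto
    ultimately show "\<exists>c. (\<forall>f\<in>insert e F. c f < 3) \<and> proper_on (insert e F) l r c" by blast
  qed
qed


lemma infinite_double_bij:
  fixes A :: "'e set"
  assumes "infinite A"
  shows "\<exists>\<phi>. bij_betw \<phi> (A \<times> (UNIV :: bool set)) A"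
proof -
  obtain a where a: "a \<in> A" using assms by fastforce
  obtain b where b: "b \<in> A - {a}" using assms by (metis finite.emptyI finite_insert ex_in_conv Diff_eq_empty_iff subset_singletonD)
  define f where "f x = (if x then a else b)" for x :: bool
  have "inj_on f UNIV \<and> f ` UNIV \<subseteq> A" using a b by (auto simp: f_def inj_on_def)
  then have "(card_of (UNIV :: bool set), card_of A) \<in> ordLeq" using card_of_ordLeq by blast
  then have "(card_of (A \<times> (UNIV :: bool set)), card_of A) \<in> ordIso"
    using card_of_Times_infinite[OF assms] by auto
  then show ?thesis using card_of_ordIso by blast
qed

definition blk :: "'e set \<Rightarrow> ('e \<Rightarrow> 'e) \<Rightarrow> 'e \<Rightarrow> 'e set" where
  "blk A g x = {y\<in>A. g y = g x}"

definition part_ok :: "'e set \<Rightarrow> ('e \<Rightarrow> 'e) \<Rightarrow> bool" where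
  "part_ok A g \<longleftrightarrow> (\<forall>x\<in>A. g x \<in> A \<and> finite (blk A g x) \<and> card (blk A g x) \<le> 3 \<and>
      (2 \<le> card (blk A g x) \<or> A = {x}))"

lemma part_finite:
  fixes A :: "'e set"
  assumes "finite A"
  shows "\<exists>g. part_ok A g"
  using assms
proof (induction "card A" arbitrary: A rule: less_induct)
  case less
  show ?case
  proof (cases "card A \<le> 3")
    case True
    show ?thesis
    proof (cases "A = {}")
      case True then show ?thesis by (auto simp: part_ok_def)
    next
      case False
      then obtain a where a: "a \<in> A" by blast
      define g where "g = (\<lambda>_::'e. a)"
      have "blk A g x = A" for x by (auto simp: blk_def g_def)
      moreover have "2 \<le> card A \<or> A = {x}" if "x \<in> A" for x
      proof (cases "2 \<le> card A")
        case False
        then have "card A \<le> 1" by simp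
        then have "\<forall>a\<in>A. \<forall>b\<in>A. a = b" using card_le_Suc0_iff_eq[OF less.prems] by simp
        then have "A = {x}" using that by blast
        then show ?thesis by simp
      qed simp
      ultimately have "part_ok A g" using True less.prems a unfolding part_ok_def by (simp add: g_def)
      then show ?thesis by blast
    qed
  next
    case False
    then have "A \<noteq> {}" by (metis card.empty zero_le)
    then obtain x1 where x1: "x1 \<in> A" by blast
    have "card (A - {x1}) \<ge> 3" using False x1 less.prems by simp
    then have "A - {x1} \<noteq> {}" by (metis card.empty not_numeral_le_zero)
    then obtain x2 where x2: "x2 \<in> A - {x1}" by blast
    define A' where "A' = A - {x1, x2}"
    have cA': "card A' < card A" "card A' \<ge> 2" using x1 x2 less.prems False
      by (auto simp: A'_def card_Diff_subset)
    have fA': "finite A'" using less.prems by (simp add: A'_def)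
    obtain g' where g': "part_ok A' g'" using less.hyps[OF cA'(1) fA'] by blast
    define g where "g y = (if y = x1 \<or> y = x2 then x1 else g' y)" for y
    have ne: "A' \<noteq> {x}" for x using cA'(2) by auto
    have blk1: "blk A g y = {x1, x2}" if "y = x1 \<or> y = x2" for y
    proof -
      have "g z \<noteq> x1" if "z \<in> A'" for z using g' that by (auto simp: part_ok_def A'_def g_def)
      then show ?thesis using that x1 x2 by (auto simp: blk_def g_def A'_def)
    qed
    have blk2: "blk A g y = blk A' g' y" if "y \<in> A'" for y
    proof -
      have "g' y \<in> A'" using g' that by (auto simp: part_ok_def)
      then have "g' y \<noteq> x1" by (auto simp: A'_def)
      then show ?thesis using that by (auto simp: blk_def g_def A'_def)
    qed
    have "part_ok A g"
      unfolding part_ok_def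
    proof
      fix y assume y: "y \<in> A"
      show "g y \<in> A \<and> finite (blk A g y) \<and> card (blk A g y) \<le> 3 \<and> (2 \<le> card (blk A g y) \<or> A = {y})"
      proof (cases "y = x1 \<or> y = x2")
        case True
        then show ?thesis using blk1[OF True] x1 x2 by (auto simp: g_def)
      next
        case False
        then have yA': "y \<in> A'" using y by (simp add: A'_def)
        then show ?thesis using blk2[OF yA'] g' ne[of y] by (auto simp: part_ok_def g_def A'_def)
      qed
    qed
    then show ?thesis by blast
  qed
qed

lemma part_infinite:
  fixes A :: "'e set"
  assumes "infinite A"
  shows "\<exists>g. part_ok A g"
proof -
  obtain \<phi> where phi: "bij_betw \<phi> (A \<times> (UNIV :: bool set)) A" using infinite_double_bij[OF assms] by blast
  define \<psi> where "\<psi> = inv_into (A \<times> (UNIV :: bool set)) \<phi>"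
  have psi: "bij_betw \<psi> A (A \<times> (UNIV :: bool set))" using phi by (simp add: \<psi>_def bij_betw_inv_into)
  define g where "g x = \<phi> (fst (\<psi> x), False)" for x
  have "blk A g x = {\<phi> (fst (\<psi> x), False), \<phi> (fst (\<psi> x), True)}" if x: "x \<in> A" for x
  proof
    show "blk A g x \<subseteq> {\<phi> (fst (\<psi> x), False), \<phi> (fst (\<psi> x), True)}"
    proof
      fix y assume "y \<in> blk A g x"
      then have y: "y \<in> A" "\<phi> (fst (\<psi> y), False) = \<phi> (fst (\<psi> x), False)" by (auto simp: blk_def g_def)
      have "\<psi> y \<in> A \<times> UNIV" "\<psi> x \<in> A \<times> UNIV" using psi y x by (auto simp: bij_betw_def)
      then have "fst (\<psi> y) = fst (\<psi> x)" using y(2) phi by (auto simp: bij_betw_def inj_on_def)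
      moreover have "\<phi> (\<psi> y) = y" using y(1) phi by (simp add: \<psi>_def bij_betw_inv_into_right)
      ultimately have "y = \<phi> (fst (\<psi> x), snd (\<psi> y))" by (metis prod.collapse)
      then show "y \<in> {\<phi> (fst (\<psi> x), False), \<phi> (fst (\<psi> x), True)}" by (cases "snd (\<psi> y)") auto
    qed
  next
    have "\<psi> x \<in> A \<times> UNIV" using psi x by (auto simp: bij_betw_def)
    then have fA: "fst (\<psi> x) \<in> A" by auto
    have inA: "\<phi> (fst (\<psi> x), b) \<in> A" for b using phi fA by (auto simp: bij_betw_def)
    have "\<psi> (\<phi> (fst (\<psi> x), b)) = (fst (\<psi> x), b)" for b
      using phi fA by (simp add: \<psi>_def bij_betw_inv_into_left)
    then have "g (\<phi> (fst (\<psi> x), b)) = g x" for b by (simp add: g_def)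
    then show "{\<phi> (fst (\<psi> x), False), \<phi> (fst (\<psi> x), True)} \<subseteq> blk A g x"
      using inA by (auto simp: blk_def)
  qed
  moreover have "\<phi> (a, False) \<noteq> \<phi> (a, True)" if "a \<in> A" for a
    using phi that by (auto simp: bij_betw_def inj_on_def)
  moreover have "g x \<in> A" if "x \<in> A" for x
  proof -
    have "\<psi> x \<in> A \<times> UNIV" using psi that by (auto simp: bij_betw_def)
    then show ?thesis using phi by (auto simp: g_def bij_betw_def)
  qed
  moreover have "fst (\<psi> x) \<in> A" if "x \<in> A" for x
  proof -
    have "\<psi> x \<in> A \<times> UNIV" using psi that by (auto simp: bij_betw_def)
    then show ?thesis by auto
  qed
  ultimately have "part_ok A g"
    unfolding part_ok_def
  proof (intro ballI conjI)
    fix x assume x: "x \<in> A"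
    assume B: "\<And>x. x \<in> A \<Longrightarrow> blk A g x = {\<phi> (fst (\<psi> x), False), \<phi> (fst (\<psi> x), True)}"
      and D: "\<And>a. a \<in> A \<Longrightarrow> \<phi> (a, False) \<noteq> \<phi> (a, True)"
      and G: "\<And>x. x \<in> A \<Longrightarrow> g x \<in> A" and P: "\<And>x. x \<in> A \<Longrightarrow> fst (\<psi> x) \<in> A"
    have c2: "card (blk A g x) = 2" using B[OF x] D[OF P[OF x]] by simp
    show "g x \<in> A" using G[OF x] .
    show "finite (blk A g x)" using B[OF x] by simp
    show "card (blk A g x) \<le> 3" using c2 by simp
    show "2 \<le> card (blk A g x) \<or> A = {x}" using c2 by simp
  qed
  then show ?thesis by blast
qed

lemma part_exists: "\<exists>g. part_ok A g"
  using part_finite part_infinite by blast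

lemma lepoll_Diff_finite:
  assumes "infinite A" "finite S"
  shows "A \<lesssim> A - S"
proof -
  have "infinite (A - S)" using assms by simp
  have "(A - S) \<union> T \<approx> A - S" if "finite T" for T
    using that
  proof (induction T rule: finite_induct)
    case empty then show ?case by simp
  next
    case (insert a T)
    have "(A - S) \<union> insert a T = insert a ((A - S) \<union> T)" by auto
    also have "\<dots> \<approx> (A - S) \<union> T" using \<open>infinite (A - S)\<close> by (intro infinite_insert_eqpoll) simp
    finally show ?case using insert.IH eqpoll_trans by blast
  qed
  from this[of "A \<inter> S"] have "A \<approx> A - S" using assms by (simp add: Un_Diff_Int)
  then show ?thesis by (rule eqpoll_imp_lepoll)
qed

lemma edge_pair:
  assumes "graph V E" "e \<in> E"
  shows "\<exists>x y. x \<noteq> y \<and> e = {x, y}"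
  using assms unfolding graph_def by (metis card_2_iff)

lemma orientation_exists:
  fixes V :: "'a set" and E :: "'a set set"
  assumes G: "graph V E" and infU: "infinite (UNIV :: 'a set)"
  shows "\<exists>t. (\<forall>e\<in>E. t e \<in> e) \<and> (\<forall>v\<in>V. finite (incident E v) \<longrightarrow>
     \<bar>\<Sum>e\<in>incident E v. (if t e = v then 1 else -1 :: int)\<bar> \<le> 1)"
proof -
  have infU2: "infinite (UNIV :: 'a set set)"
    using infU by (metis Pow_UNIV finite_Pow_iff)
  define dom where "dom e = (if e \<in> E then e else {undefined})" for e :: "'a set"
  define Cs where "Cs = {v\<in>V. finite (incident E v)}"
  define sat where "sat v t \<longleftrightarrow> \<bar>\<Sum>e\<in>incident E v. (if t e = v then 1 else -1 :: int)\<bar> \<le> 1"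
    for v and t :: "'a set \<Rightarrow> 'a"
  have finE: "finite e" if "e \<in> E" for e
    using G that unfolding graph_def by (metis card.infinite zero_neq_numeral)
  have "\<exists>t. (\<forall>e. t e \<in> dom e) \<and> (\<forall>v\<in>Cs. sat v t)"
  proof (rule compactness[where vars = "incident E"])
    show "finite (dom e)" for e using finE by (simp add: dom_def)
    show "finite (incident E v)" if "v \<in> Cs" for v using that by (simp add: Cs_def)
    show "sat v g" if "v \<in> Cs" "\<And>e. e \<in> incident E v \<Longrightarrow> f e = g e" "sat v f" for v f g
    proof -
      have "(\<Sum>e\<in>incident E v. (if f e = v then 1 else -1 :: int)) = (\<Sum>e\<in>incident E v. (if g e = v then 1 else -1 :: int))"
        using that(2) by (intro sum.cong) auto
      then show ?thesis using that(3) by (simp add: sat_def)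
    qed
    show "\<exists>t. (\<forall>e. t e \<in> dom e) \<and> (\<forall>v\<in>C. sat v t)" if C: "C \<subseteq> Cs" "finite C" for C
    proof -
      define EC where "EC = (\<Union>v\<in>C. incident E v)"
      have finEC: "finite EC" using C by (auto simp: EC_def Cs_def)
      have ECE: "EC \<subseteq> E" by (auto simp: EC_def incident_def)
      define p where "p e = (SOME pr. fst pr \<noteq> snd pr \<and> e = {fst pr, snd pr})" for e :: "'a set"
      have p: "fst (p e) \<noteq> snd (p e) \<and> e = {fst (p e), snd (p e)}" if eE: "e \<in> E" for e
      proof -
        obtain x y where "x \<noteq> y" "e = {x, y}" using edge_pair[OF G eE] by blast
        then have "\<exists>pr. fst pr \<noteq> snd pr \<and> e = {fst pr, snd pr}" by (intro exI[of _ "(x, y)"]) simp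
        then show ?thesis unfolding p_def by (rule someI_ex)
      qed
      obtain q where q1: "\<forall>e\<in>EC. q e = p e \<or> q e = prod.swap (p e)"
        and q2: "\<forall>x. \<bar>\<Sum>e\<in>EC. tm (q e) x\<bar> \<le> 1"
        using balanced_orientation[OF finEC infU2, of p] by blast
      have q: "fst (q e) \<noteq> snd (q e) \<and> e = {fst (q e), snd (q e)}" if eEC: "e \<in> EC" for e
      proof -
        have pe: "fst (p e) \<noteq> snd (p e) \<and> e = {fst (p e), snd (p e)}" using p ECE eEC by blast
        have "q e = p e \<or> q e = prod.swap (p e)" using q1 eEC by blast
        then show ?thesis
        proof
          assume "q e = p e" then show ?thesis using pe by simp
        next
          assume "q e = prod.swap (p e)" then show ?thesis using pe by (auto simp: prod.swap_def)
        qed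
      qed
      define t where "t e = (if e \<in> EC then fst (q e) else (SOME x. x \<in> dom e))" for e
      have "t e \<in> dom e" for e
      proof (cases "e \<in> EC")
        case True then show ?thesis using q[OF True] ECE by (auto simp: t_def dom_def)
      next
        case False
        have "dom e \<noteq> {}" using p by (auto simp: dom_def)
        then show ?thesis using False by (auto simp: t_def intro: someI_ex)
      qed
      moreover have "sat v t" if v: "v \<in> C" for v
      proof -
        have incEC: "incident E v \<subseteq> EC" using v by (auto simp: EC_def)
        have "(\<Sum>e\<in>EC. tm (q e) v) = (\<Sum>e\<in>incident E v. tm (q e) v)"
        proof (rule sum.mono_neutral_right[OF finEC incEC])
          show "\<forall>e\<in>EC - incident E v. tm (q e) v = 0"
          proof
            fix e assume e: "e \<in> EC - incident E v"
            then have "v \<notin> e" using ECE by (auto simp: incident_def)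
            then show "tm (q e) v = 0" using q[of e] e by (auto simp: tm_def)
          qed
        qed
        also have "\<dots> = (\<Sum>e\<in>incident E v. (if t e = v then 1 else -1 :: int))"
        proof (rule sum.cong[OF refl])
          fix e assume e: "e \<in> incident E v"
          then have eEC: "e \<in> EC" and ve: "v \<in> e" using incEC by (auto simp: incident_def)
          have "v = fst (q e) \<or> v = snd (q e)" using q[OF eEC] ve by blast
          then show "tm (q e) v = (if t e = v then 1 else -1)"
            using q[OF eEC] eEC by (auto simp: tm_def t_def)
        qed
        finally show ?thesis using q2 unfolding sat_def by metis
      qed
      ultimately show ?thesis by blast
    qed
  qed
  then obtain t where t: "\<forall>e. t e \<in> dom e" "\<forall>v\<in>Cs. sat v t" by blast
  have "\<forall>e\<in>E. t e \<in> e" using t(1) by (metis dom_def)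
  moreover have "\<forall>v\<in>V. finite (incident E v) \<longrightarrow>
     \<bar>\<Sum>e\<in>incident E v. (if t e = v then 1 else -1 :: int)\<bar> \<le> 1"
    using t(2) by (auto simp: Cs_def sat_def)
  ultimately show ?thesis by blast
qed

theorem mainTheorem7:
  fixes V :: "'a set" and E :: "'a set set"
  assumes "graph V E"
    and "infinite V"
    and "min_degree_ge V E 4"
  shows "\<exists>c. majority_3_edge_coloring V E c"
proof -
  note G = assms(1)
  have infU: "infinite (UNIV :: 'a set)" using assms(2) by (meson finite_subset subset_UNIV)
  obtain t where t1: "\<forall>e\<in>E. t e \<in> e" and t2: "\<forall>v\<in>V. finite (incident E v) \<longrightarrow>
     \<bar>\<Sum>e\<in>incident E v. (if t e = v then 1 else -1 :: int)\<bar> \<le> 1"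
    using orientation_exists[OF G infU] by blast
  define h where "h e = (SOME y. y \<in> e \<and> y \<noteq> t e)" for e
  have th: "h e \<in> e \<and> h e \<noteq> t e \<and> e = {t e, h e}" if eE: "e \<in> E" for e
  proof -
    obtain x y where xy: "x \<noteq> y" "e = {x, y}" using edge_pair[OF G eE] by blast
    have "t e \<in> e" using t1 eE by blast
    then have "\<exists>y. y \<in> e \<and> y \<noteq> t e" using xy by auto
    then have "h e \<in> e \<and> h e \<noteq> t e" unfolding h_def by (rule someI_ex)
    then show ?thesis using xy \<open>t e \<in> e\<close> by auto
  qed
  define Out where "Out v = {e\<in>E. t e = v}" for v
  define In where "In v = {e\<in>E. h e = v}" for v
  define go where "go v = (SOME g. part_ok (Out v) g)" for v
  define gi where "gi v = (SOME g. part_ok (In v) g)" for v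
  have go: "part_ok (Out v) (go v)" for v unfolding go_def using part_exists by (rule someI_ex)
  have gi: "part_ok (In v) (gi v)" for v unfolding gi_def using part_exists by (rule someI_ex)
  define mem where "mem \<gamma> = (case \<gamma> of (b, v, z) \<Rightarrow>
      if b then {e\<in>Out v. go v e = z} else {e\<in>In v. gi v e = z})" for \<gamma> :: "bool \<times> 'a \<times> 'a set"
  have memE: "mem \<gamma> \<subseteq> E" for \<gamma> by (auto simp: mem_def Out_def In_def split: prod.splits)
  have blk_fin: "finite (blk A g x) \<and> card (blk A g x) \<le> 3" if "part_ok A g" "x \<in> A" for A g x
    using that by (auto simp: part_ok_def)
  have mem_fin: "finite (mem \<gamma>) \<and> card (mem \<gamma>) \<le> 3" for \<gamma>
  proof -
    obtain b v z where \<gamma>: "\<gamma> = (b, v, z)" by (cases \<gamma>) auto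
    show ?thesis
    proof (cases b)
      case True
      show ?thesis
      proof (cases "\<exists>x\<in>Out v. go v x = z")
        case True
        then obtain x where x: "x \<in> Out v" "go v x = z" by blast
        have "mem \<gamma> = blk (Out v) (go v) x" using \<gamma> \<open>b\<close> x by (auto simp: mem_def blk_def)
        then show ?thesis using blk_fin[OF go x(1)] by simp
      next
        case False
        then have "mem \<gamma> = {}" using \<gamma> \<open>b\<close> by (auto simp: mem_def)
        then show ?thesis by simp
      qed
    next
      case False
      show ?thesis
      proof (cases "\<exists>x\<in>In v. gi v x = z")
        case True
        then obtain x where x: "x \<in> In v" "gi v x = z" by blast
        have "mem \<gamma> = blk (In v) (gi v) x" using \<gamma> \<open>\<not> b\<close> x by (auto simp: mem_def blk_def)
        then show ?thesis using blk_fin[OF gi x(1)] by simp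
      next
        case False
        then have "mem \<gamma> = {}" using \<gamma> \<open>\<not> b\<close> by (auto simp: mem_def)
        then show ?thesis by simp
      qed
    qed
  qed
  define L where "L e = (t e, go (t e) e)" for e
  define R where "R e = (h e, gi (h e) e)" for e
  have "\<exists>col. (\<forall>e. col e \<in> {0, 1, 2::nat}) \<and> (\<forall>\<gamma>\<in>UNIV. inj_on col (mem \<gamma>))"
  proof (rule compactness[where vars = mem])
    show "finite {0, 1, 2::nat}" by simp
    show "finite (mem \<gamma>)" for \<gamma> using mem_fin by blast
    show "inj_on g (mem \<gamma>)" if "\<And>e. e \<in> mem \<gamma> \<Longrightarrow> f e = g e" "inj_on f (mem \<gamma>)" for \<gamma> f g
      using that by (metis inj_on_cong)
    show "\<exists>f. (\<forall>e. f e \<in> {0, 1, 2::nat}) \<and> (\<forall>\<gamma>\<in>C. inj_on f (mem \<gamma>))" if C: "C \<subseteq> UNIV" "finite C" for C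
    proof -
      define F where "F = \<Union>(mem ` C)"
      have finF: "finite F" using C mem_fin by (auto simp: F_def)
      have FE: "F \<subseteq> E" using memE by (auto simp: F_def)
      have fibL: "card {e\<in>F. L e = x} \<le> 3" for x
      proof -
        obtain v z where x: "x = (v, z)" by (cases x) auto
        have "{e\<in>F. L e = x} \<subseteq> mem (True, v, z)" using FE x by (auto simp: L_def mem_def Out_def)
        then have "card {e\<in>F. L e = x} \<le> card (mem (True, v, z))" using mem_fin by (intro card_mono) auto
        then show ?thesis using mem_fin[of "(True, v, z)"] by simp
      qed
      have fibR: "card {e\<in>F. R e = x} \<le> 3" for x
      proof -
        obtain v z where x: "x = (v, z)" by (cases x) auto
        have "{e\<in>F. R e = x} \<subseteq> mem (False, v, z)" using FE x by (auto simp: R_def mem_def In_def)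
        then have "card {e\<in>F. R e = x} \<le> card (mem (False, v, z))" using mem_fin by (intro card_mono) auto
        then show ?thesis using mem_fin[of "(False, v, z)"] by simp
      qed
      obtain c where c1: "\<forall>e\<in>F. c e < 3" and c2: "proper_on F L R c"
        using bip_color[OF finF, of L R] fibL fibR by blast
      define c' where "c' e = (if e \<in> F then c e else 0)" for e
      have "\<forall>e. c' e \<in> {0, 1, 2::nat}" using c1 by (auto simp: c'_def less_Suc_eq)
      moreover have "inj_on c' (mem \<gamma>)" if g: "\<gamma> \<in> C" for \<gamma>
      proof (rule inj_onI)
        fix e f assume ef: "e \<in> mem \<gamma>" "f \<in> mem \<gamma>" "c' e = c' f"
        have eF: "e \<in> F" "f \<in> F" using ef g by (auto simp: F_def)
        obtain b v z where \<gamma>: "\<gamma> = (b, v, z)" by (cases \<gamma>) auto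
        have "L e = L f \<or> R e = R f"
        proof (cases b)
          case True then show ?thesis using ef \<gamma> by (auto simp: mem_def Out_def L_def)
        next
          case False then show ?thesis using ef \<gamma> by (auto simp: mem_def In_def R_def)
        qed
        note LR = this
        show "e = f"
        proof (rule ccontr)
          assume "e \<noteq> f"
          then have "c e \<noteq> c f" using c2 eF LR unfolding proper_on_def by blast
          then show False using ef(3) eF by (simp add: c'_def)
        qed
      qed
      ultimately have "(\<forall>e. c' e \<in> {0, 1, 2::nat}) \<and> (\<forall>\<gamma>\<in>C. inj_on c' (mem \<gamma>))" by blast
      then show ?thesis by blast
    qed
  qed
  then obtain col where col1: "\<forall>e. col e \<in> {0, 1, 2::nat}" and col2: "\<And>\<gamma>. inj_on col (mem \<gamma>)" by blast
  define c where "c e = col e + 1" for e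
  have "majority_3_edge_coloring V E c"
    unfolding majority_3_edge_coloring_def
  proof (intro conjI ballI)
    fix e assume "e \<in> E"
    show "c e \<in> {1, 2, 3}" using col1[rule_format, of e] by (auto simp: c_def)
  next
    fix v \<alpha> assume v: "v \<in> V" and \<alpha>: "\<alpha> \<in> {1, 2, 3::nat}"
    show "{e \<in> incident E v. c e = \<alpha>} \<lesssim> {e \<in> incident E v. c e \<noteq> \<alpha>}"
proof -
      let ?inc = "incident E v"
      have inc_eq: "e \<in> ?inc \<longleftrightarrow> e \<in> Out v \<or> e \<in> In v" for e
      proof
        assume e: "e \<in> ?inc"
        then have eE: "e \<in> E" and ve: "v \<in> e" by (auto simp: incident_def)
        then have "v = t e \<or> v = h e" using th[OF eE] by blast
        then show "e \<in> Out v \<or> e \<in> In v" using eE by (auto simp: Out_def In_def)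
      next
        assume "e \<in> Out v \<or> e \<in> In v"
        then show "e \<in> ?inc" using t1 th by (auto simp: Out_def In_def incident_def)
      qed
      have OI: "Out v \<inter> In v = {}" unfolding Out_def In_def using th by blast
      define grp where "grp e = (if t e = v then mem (True, v, go v e) else mem (False, v, gi v e))" for e
      have grp_out: "grp e = blk (Out v) (go v) e" if "e \<in> Out v" for e
        using that by (auto simp: grp_def mem_def blk_def Out_def)
      have grp_in: "grp e = blk (In v) (gi v) e" if "e \<in> In v" for e
      proof -
        have "t e \<noteq> v" using that th unfolding In_def by force
        then show ?thesis using that by (auto simp: grp_def mem_def blk_def)
      qed
      have g1: "e \<in> grp e" if "e \<in> ?inc" for e
        using that inc_eq grp_out grp_in by (auto simp: blk_def)
      have g2: "grp e \<subseteq> ?inc" if "e \<in> ?inc" for e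
        using that inc_eq grp_out grp_in by (auto simp: blk_def)
      have g3: "inj_on col (grp e)" for e using col2 by (simp add: grp_def)
      have g4: "grp f = grp e" if "e \<in> ?inc" "f \<in> grp e" for e f
      proof (cases "e \<in> Out v")
        case True
        then have "f \<in> Out v" "go v f = go v e" using that grp_out by (auto simp: blk_def)
        then show ?thesis using grp_out True by (auto simp: blk_def)
      next
        case False
        then have eI: "e \<in> In v" using that inc_eq by blast
        then have "f \<in> In v" "gi v f = gi v e" using that grp_in by (auto simp: blk_def)
        then show ?thesis using grp_in eI by (auto simp: blk_def)
      qed
      have g5: "finite (grp e) \<and> (2 \<le> card (grp e) \<or> Out v = {e} \<or> In v = {e})" if "e \<in> ?inc" for e
      proof (cases "e \<in> Out v")
        case True
        then show ?thesis using grp_out[OF True] go[of v] unfolding part_ok_def by auto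
      next
        case False
        then have eI: "e \<in> In v" using that inc_eq by blast
        then show ?thesis using grp_in[OF eI] gi[of v] unfolding part_ok_def by auto
      qed
      define S where "S = {e\<in>?inc. \<forall>f\<in>grp e. f = e}"
      have S_sub: "S \<subseteq> {e. Out v = {e}} \<union> {e. In v = {e}}"
      proof
        fix e assume e: "e \<in> S"
        then have einc: "e \<in> ?inc" and sing: "\<forall>f\<in>grp e. f = e" by (auto simp: S_def)
        have "grp e = {e}" using sing g1[OF einc] by blast
        then have "\<not> 2 \<le> card (grp e)" by simp
        then show "e \<in> {e. Out v = {e}} \<union> {e. In v = {e}}" using g5[OF einc] by blast
      qed
      have finS: "finite S"
      proof (rule finite_subset[OF S_sub])
        have "{e. Out v = {e}} \<subseteq> Out v" "{e. In v = {e}} \<subseteq> In v" by auto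
        have "finite {e. Out v = {e}}"
        proof (cases "\<exists>x. Out v = {x}")
          case True then obtain x where "Out v = {x}" by blast
          then have "{e. Out v = {e}} = {x}" by auto
          then show ?thesis by simp
        next
          case False then have "{e. Out v = {e}} = {}" by auto
          then show ?thesis by simp
        qed
        moreover have "finite {e. In v = {e}}"
        proof (cases "\<exists>x. In v = {x}")
          case True then obtain x where "In v = {x}" by blast
          then have "{e. In v = {e}} = {x}" by auto
          then show ?thesis by simp
        next
          case False then have "{e. In v = {e}} = {}" by auto
          then show ?thesis by simp
        qed
        ultimately show "finite ({e. Out v = {e}} \<union> {e. In v = {e}})" by simp
      qed
      define A where "A = {e \<in> ?inc. c e = \<alpha>}"
      define N where "N = {e \<in> ?inc. c e \<noteq> \<alpha>}"
      define \<pi> where "\<pi> e = (SOME f. f \<in> grp e \<and> f \<noteq> e)" for e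
      have pi: "\<pi> e \<in> grp e \<and> \<pi> e \<noteq> e" if "e \<in> ?inc" "e \<notin> S" for e
      proof -
        have "\<exists>f. f \<in> grp e \<and> f \<noteq> e" using that by (auto simp: S_def)
        then show ?thesis unfolding \<pi>_def by (rule someI_ex)
      qed
      have AS: "A - S \<lesssim> N"
        unfolding lepoll_def
      proof (intro exI conjI)
        show "inj_on \<pi> (A - S)"
        proof (rule inj_onI)
          fix e e' assume e: "e \<in> A - S" and e': "e' \<in> A - S" and eq: "\<pi> e = \<pi> e'"
          have einc: "e \<in> ?inc" "e \<notin> S" "c e = \<alpha>" using e by (auto simp: A_def)
          have einc': "e' \<in> ?inc" "e' \<notin> S" "c e' = \<alpha>" using e' by (auto simp: A_def)
          have p1: "\<pi> e \<in> grp e" using pi[OF einc(1,2)] by blast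
          have p2: "\<pi> e \<in> grp e'" using pi[OF einc'(1,2)] eq by simp
          have "grp e = grp e'" using g4[OF einc(1) p1] g4[OF einc'(1) p2] by simp
          then have "e' \<in> grp e" using g1[OF einc'(1)] by simp
          moreover have "col e = col e'" using einc(3) einc'(3) by (simp add: c_def)
          ultimately show "e = e'" using g3[of e] g1[OF einc(1)] by (meson inj_onD)
        qed
        show "\<pi> ` (A - S) \<subseteq> N"
        proof
          fix f assume "f \<in> \<pi> ` (A - S)"
          then obtain e where e: "e \<in> A - S" and f: "f = \<pi> e" by blast
          have einc: "e \<in> ?inc" "e \<notin> S" "c e = \<alpha>" using e by (auto simp: A_def)
          have p: "\<pi> e \<in> grp e" "\<pi> e \<noteq> e" using pi[OF einc(1,2)] by auto
          have "col (\<pi> e) \<noteq> col e" using g3[of e] p g1[OF einc(1)] by (meson inj_onD)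
          then have "c (\<pi> e) \<noteq> \<alpha>" using einc(3) by (simp add: c_def)
          moreover have "\<pi> e \<in> ?inc" using g2[OF einc(1)] p(1) by blast
          ultimately show "f \<in> N" using f by (simp add: N_def)
        qed
      qed
      show ?thesis
      proof (cases "finite ?inc")
        case True
        have md: "{..<4::nat} \<lesssim> ?inc" using assms(3) v by (simp add: min_degree_ge_def)
        then have c4: "4 \<le> card ?inc" using True by (simp add: lepoll_iff_card_le)
        have finO: "finite (Out v)" "finite (In v)" using True inc_eq by (auto intro: finite_subset)
        have incU: "?inc = Out v \<union> In v" using inc_eq by blast
        have "(\<Sum>e\<in>?inc. (if t e = v then 1 else -1 :: int)) = (\<Sum>e\<in>Out v. 1) + (\<Sum>e\<in>In v. -1)"
        proof -
          have "(\<Sum>e\<in>?inc. (if t e = v then 1 else -1 :: int)) =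
              (\<Sum>e\<in>Out v. (if t e = v then 1 else -1 :: int)) + (\<Sum>e\<in>In v. (if t e = v then 1 else -1 :: int))"
            unfolding incU using finO OI by (rule sum.union_disjoint[OF finO(1) finO(2)] | simp add: sum.union_disjoint)
          also have "(\<Sum>e\<in>Out v. (if t e = v then 1 else -1 :: int)) = (\<Sum>e\<in>Out v. 1)"
            by (rule sum.cong) (auto simp: Out_def)
          also have "(\<Sum>e\<in>In v. (if t e = v then 1 else -1 :: int)) = (\<Sum>e\<in>In v. -1)"
            by (rule sum.cong) (use th in \<open>force simp: In_def\<close>)+
          finally show ?thesis .
        qed
        note sumeq = this
        have b1: "\<bar>\<Sum>e\<in>?inc. (if t e = v then 1 else -1 :: int)\<bar> \<le> 1" using t2 v True by blast
        have "\<bar>int (card (Out v)) - int (card (In v))\<bar> \<le> 1" using b1 unfolding sumeq by simp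
        moreover have "card ?inc = card (Out v) + card (In v)" using incU finO OI by (simp add: card_Un_disjoint)
        ultimately have "2 \<le> card (Out v)" "2 \<le> card (In v)" using c4 by linarith+
        then have "Out v \<noteq> {e}" "In v \<noteq> {e}" for e by auto
        then have "S = {}" using S_sub by blast
        then show ?thesis using AS by (simp add: A_def N_def)
      next
        case False
        show ?thesis
        proof (cases "finite A")
          case True
          have "N = ?inc - A" by (auto simp: A_def N_def)
          then have "infinite N" using False True by simp
          then show ?thesis using True finite_lepoll_infinite by (simp add: A_def N_def)
        next
          case infA: False
          have "A \<lesssim> A - S" using infA finS by (rule lepoll_Diff_finite)
          then have "A \<lesssim> N" using AS by (rule lepoll_trans)
          then show ?thesis by (simp add: A_def N_def)
        qed
      qed
    qed
  qed
  then show ?thesis by blast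
qed

end
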